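(* Let $G$ be a subgroup of $\mathrm{GL}_n(\mathbb{R})$ containing $\mathrm{SO}_n(\mathbb{R})$. Then there exists a subgroup $H$ of $(\mathbb{R}^*, \times)$ such that $G$ equals either $\mathrm{SO}_n(\mathbb{R}) \rtimes H$ or $\mathrm{SL}_n(\mathbb{R}) \rtimes H$. Moreover, if $G$ is closed, then $H$ is closed.
   Context: One writes $\mathrm{GL}_n(\mathbb{R}) = \mathrm{SL}_n(\mathbb{R}) \rtimes \mathbb{R}^*$, where $\mathbb{R}^*$ is embedded in $\mathrm{GL}_n(\mathbb{R})$ via the injective homomorphism $x \mapsto |x|^{1/n}\,\mathrm{Diag}(\mathrm{sgn}(x), 1, \ldots, 1)$; for a subgroup $H \subset \mathbb{R}^*$, $K \rtimes H$ (with $K = \mathrm{SO}_n(\mathbb{R})$ or $\mathrm{SL}_n(\mathbb{R})$) denotes the subgroup of $\mathrm{GL}_n(\mathbb{R})$ consisting of products $k\,|x|^{1/n}\mathrm{Diag}(\mathrm{sgn}(x),1,\ldots,1)$ with $k \in K$, $x \in H$. Here $\mathrm{Diag}(a_1,\ldots,a_n)$ is the diagonal matrix with entries $a_1,\ldots,a_n$ and $\mathrm{sgn}$ is the sign function. *)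

theory Defs
  imports "HOL-Analysis.Analysis"
begin

text \<open>Matrices in M_n(R) are elements of real^'n^'n; the index type 'n is finite
  with n = CARD('n); its well-order supplies the "first" coordinate.\<close>

definition GLn :: "(real^('n::finite)^('n::finite)) set" where
  "GLn = {A. invertible A}"

definition SLn :: "(real^('n::finite)^('n::finite)) set" where
  "SLn = {A. det A = 1}"

definition SOn :: "(real^('n::finite)^('n::finite)) set" where
  "SOn = {A. orthogonal_matrix A \<and> det A = 1}"

definition first_index :: "'n::{finite,wellorder}" where
  "first_index = (LEAST i. True)"

definition emb :: "real \<Rightarrow> real^('n::{finite,wellorder})^('n::{finite,wellorder})" where
  "emb x = (\<chi> i j. if i = j then
              (if i = (first_index::'n::{finite,wellorder}) then sgn x else 1) * \<bar>x\<bar> powr (1 / real CARD('n::{finite,wellorder}))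
            else 0)"

definition semidir :: "(real^('n::{finite,wellorder})^('n::{finite,wellorder})) set \<Rightarrow> real set \<Rightarrow> (real^('n::{finite,wellorder})^('n::{finite,wellorder})) set" where
  "semidir K H = {k ** emb x | k x. k \<in> K \<and> x \<in> H}"

definition is_subgroup_GL :: "(real^('n::finite)^('n::finite)) set \<Rightarrow> bool" where
  "is_subgroup_GL G \<longleftrightarrow> G \<subseteq> GLn \<and> mat 1 \<in> G \<and>
     (\<forall>A\<in>G. \<forall>B\<in>G. A ** B \<in> G) \<and> (\<forall>A\<in>G. matrix_inv A \<in> G)"

definition is_subgroup_Rstar :: "real set \<Rightarrow> bool" where
  "is_subgroup_Rstar H \<longleftrightarrow> H \<subseteq> - {0} \<and> 1 \<in> H \<and>
     (\<forall>x\<in>H. \<forall>y\<in>H. x * y \<in> H) \<and> (\<forall>x\<in>H. inverse x \<in> H)"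

end

theory Submission
  imports Defs
begin

definition outer :: "real^'n \<Rightarrow> real^'n \<Rightarrow> real^'n^'n" where
  "outer x y = (\<chi> i j. x$i * y$j)"

definition Em :: "real^'n \<Rightarrow> real^'n \<Rightarrow> real \<Rightarrow> real \<Rightarrow> real \<Rightarrow> real \<Rightarrow> real^'n^'n" where
  "Em u v a b c d = mat 1 + (a - 1) *\<^sub>R outer u u + b *\<^sub>R outer u v + c *\<^sub>R outer v u + (d - 1) *\<^sub>R outer v v"

lemma outer_mv: "outer x y *v w = (y \<bullet> w) *\<^sub>R x"
  by (simp add: outer_def matrix_vector_mult_def inner_vec_def vec_eq_iff sum_distrib_left mult_ac)

lemma Em_mv: "Em u v a b c d *v w = w + ((a-1)*(u\<bullet>w) + b*(v\<bullet>w)) *\<^sub>R u + (c*(u\<bullet>w) + (d-1)*(v\<bullet>w)) *\<^sub>R v"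
  by (simp add: Em_def matrix_vector_mult_add_rdistrib outer_mv scaleR_matrix_vector_assoc[symmetric] algebra_simps)

lemma Em_entry: "Em u v a b c d $ i $ j = of_bool (i = j) + (a-1) * (u$i * u$j) + b*(u$i * v$j) + c*(v$i * u$j) + (d-1)*(v$i * v$j)"
  by (simp add: Em_def outer_def mat_def)

lemma coeff_eq2: "p = p' \<Longrightarrow> q = q' \<Longrightarrow> w + p *\<^sub>R u + q *\<^sub>R v = w + p' *\<^sub>R u + q' *\<^sub>R (v::real^'n)"
  by simp

lemma Em_mult:
  fixes u v :: "real^'n"
  assumes "u \<bullet> u = 1" "v \<bullet> v = 1" "u \<bullet> v = 0"
  shows "Em u v a b c d ** Em u v a' b' c' d' = Em u v (a*a'+b*c') (a*b'+b*d') (c*a'+d*c') (c*b'+d*d')"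
proof -
  have vu: "v \<bullet> u = 0" using assms by (simp add: inner_commute)
  show ?thesis
  proof (rule iffD2[OF matrix_eq], rule allI)
    fix w :: "real^'n"
    have "(Em u v a b c d ** Em u v a' b' c' d') *v w = Em u v a b c d *v (Em u v a' b' c' d' *v w)"
      by (simp add: matrix_vector_mul_assoc)
    also have "\<dots> = w + (((a'-1)*(u\<bullet>w) + b'*(v\<bullet>w)) + ((a-1)*(u\<bullet>w + ((a'-1)*(u\<bullet>w) + b'*(v\<bullet>w))) + b*(v\<bullet>w + (c'*(u\<bullet>w) + (d'-1)*(v\<bullet>w))))) *\<^sub>R u
       + ((c'*(u\<bullet>w) + (d'-1)*(v\<bullet>w)) + (c*(u\<bullet>w + ((a'-1)*(u\<bullet>w) + b'*(v\<bullet>w))) + (d-1)*(v\<bullet>w + (c'*(u\<bullet>w) + (d'-1)*(v\<bullet>w))))) *\<^sub>R v"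
      by (simp add: Em_mv inner_add_right assms vu algebra_simps)
    also have "\<dots> = Em u v (a*a'+b*c') (a*b'+b*d') (c*a'+d*c') (c*b'+d*d') *v w"
      unfolding Em_mv by (rule coeff_eq2) (simp_all add: algebra_simps)
    finally show "(Em u v a b c d ** Em u v a' b' c' d') *v w = Em u v (a*a'+b*c') (a*b'+b*d') (c*a'+d*c') (c*b'+d*d') *v w" .
  qed
qed

lemma Em_id: "Em u v 1 0 0 1 = mat 1"
  by (simp add: Em_def)

lemma transpose_outer: "transpose (outer x y) = outer y x"
  by (simp add: outer_def transpose_def vec_eq_iff)

lemma transpose_Em: "transpose (Em u v a b c d) = Em u v a c b d"
  by (simp add: vec_eq_iff Em_entry transpose_def algebra_simps)

definition orthonormal2 :: "real^'n \<Rightarrow> real^'n \<Rightarrow> bool" where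
  "orthonormal2 u v \<longleftrightarrow> u \<bullet> u = 1 \<and> v \<bullet> v = 1 \<and> u \<bullet> v = 0"

lemma Em_mult':
  "orthonormal2 u v \<Longrightarrow> Em u v a b c d ** Em u v a' b' c' d' = Em u v (a*a'+b*c') (a*b'+b*d') (c*a'+d*c') (c*b'+d*d')"
  unfolding orthonormal2_def by (rule Em_mult) auto

abbreviation Rot :: "real^'n \<Rightarrow> real^'n \<Rightarrow> real \<Rightarrow> real^'n^'n" where
  "Rot u v t \<equiv> Em u v (cos t) (- sin t) (sin t) (cos t)"

lemma Rot_orth:
  assumes "orthonormal2 u v"
  shows "orthogonal_matrix (Rot u v t)"
proof -
  have "transpose (Rot u v t) ** Rot u v t = mat 1"
    unfolding transpose_Em Em_mult'[OF assms]
    by (simp add: Em_id power2_eq_square[symmetric] algebra_simps)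
  then show ?thesis by (simp add: orthogonal_matrix)
qed

lemma Rot_half:
  assumes "orthonormal2 u v"
  shows "Rot u v t = Rot u v (t/2) ** Rot u v (t/2)"
proof -
  have t: "t = t/2 + t/2" by simp
  show ?thesis
    unfolding Em_mult'[OF assms]
    by (subst (1 2 3 4) t, simp only: cos_add sin_add) (simp add: algebra_simps)
qed

lemma Rot_det:
  assumes "orthonormal2 u v"
  shows "det (Rot u v t) = 1"
proof -
  have "det (Rot u v t) = det (Rot u v (t/2)) * det (Rot u v (t/2))"
    by (subst Rot_half[OF assms]) (simp add: det_mul)
  moreover have "det (Rot u v (t/2)) = 1 \<or> det (Rot u v (t/2)) = -1"
    by (rule det_orthogonal_matrix[OF Rot_orth[OF assms]])
  ultimately show ?thesis by auto
qed

lemma inner_transpose_mv: "u \<bullet> (transpose q *v w) = (q *v u) \<bullet> (w::real^'n)"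
  by (metis dot_lmul_matrix inner_commute transpose_matrix_vector)

lemma orth_inner:
  fixes q :: "real^'n^'n"
  assumes "orthogonal_matrix q"
  shows "(q *v x) \<bullet> (q *v y) = x \<bullet> y"
proof -
  have "(q *v x) \<bullet> (q *v y) = x \<bullet> (transpose q *v (q *v y))"
    by (metis inner_transpose_mv inner_commute)
  also have "\<dots> = x \<bullet> y"
    using assms by (metis matrix_vector_mul_assoc matrix_vector_mul_lid orthogonal_matrix_def)
  finally show ?thesis .
qed

lemma orth_orthonormal2:
  assumes "orthogonal_matrix q" "orthonormal2 u v"
  shows "orthonormal2 (q *v u) (q *v v)"
  using assms by (simp add: orthonormal2_def orth_inner)

lemma Em_conj:
  fixes q :: "real^'n^'n"
  assumes "orthogonal_matrix q"
  shows "q ** Em u v a b c d ** transpose q = Em (q *v u) (q *v v) a b c d"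
proof (rule iffD2[OF matrix_eq], rule allI)
  fix w :: "real^'n"
  have qq: "q *v (transpose q *v w) = w"
    using assms by (metis matrix_vector_mul_assoc matrix_vector_mul_lid orthogonal_matrix_def)
  show "(q ** Em u v a b c d ** transpose q) *v w = Em (q *v u) (q *v v) a b c d *v w"
    by (simp add: matrix_vector_mul_assoc[symmetric] Em_mv inner_transpose_mv qq
        matrix_vector_right_distrib matrix_vector_mult_scaleR del: transpose_matrix_vector)
qed

lemma Em_neg2: "Em u (- v) a b c d = Em u v a (-b) (-c) d"
  by (simp add: vec_eq_iff Em_entry)

definition refl :: "real^'n \<Rightarrow> real^'n^'n" where
  "refl a = mat 1 - (2 / (a \<bullet> a)) *\<^sub>R outer a a"

lemma refl_mv: "refl a *v w = w - (2 * (a \<bullet> w) / (a \<bullet> a)) *\<^sub>R a"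
  by (simp add: refl_def matrix_vector_mult_diff_rdistrib outer_mv scaleR_matrix_vector_assoc[symmetric])

lemma refl_fix: "a \<bullet> w = 0 \<Longrightarrow> refl a *v w = w"
  by (simp add: refl_mv)

lemma refl_sym: "transpose (refl a) = refl a"
  by (simp add: refl_def vec_eq_iff transpose_def outer_def mat_def mult.commute)

lemma refl_sq: "refl a ** refl (a::real^'n) = mat 1"
proof (cases "a = 0")
  case True
  then show ?thesis by (simp add: refl_def)
next
  case False
  then have aa: "a \<bullet> a \<noteq> 0" by simp
  show ?thesis
  proof (rule iffD2[OF matrix_eq], rule allI)
    fix w :: "real^'n"
    have "(refl a ** refl a) *v w = refl a *v (refl a *v w)"
      by (simp add: matrix_vector_mul_assoc)
    also have "\<dots> = w"
    proof -
      have k: "a \<bullet> (refl a *v w) = - (a \<bullet> w)"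
        using aa by (simp add: refl_mv inner_diff_right)
      have "refl a *v (refl a *v w) = (refl a *v w) - (2 * (a \<bullet> (refl a *v w)) / (a \<bullet> a)) *\<^sub>R a"
        by (rule refl_mv)
      also have "\<dots> = w"
        unfolding k by (simp add: refl_mv)
      finally show ?thesis .
    qed
    finally show "(refl a ** refl a) *v w = mat 1 *v w" by simp
  qed
qed

lemma refl_orth: "orthogonal_matrix (refl a)"
  by (simp add: orthogonal_matrix refl_sym refl_sq)

lemma refl_map:
  fixes u e :: "real^'n"
  assumes "u \<bullet> u = 1" "e \<bullet> e = 1"
  shows "refl (u - e) *v u = e"
proof (cases "u = e")
  case True
  then show ?thesis by (simp add: refl_mv)
next
  case False
  then have ne: "(u - e) \<bullet> (u - e) \<noteq> 0" by simp
  have eq: "(u - e) \<bullet> (u - e) = 2 * ((u - e) \<bullet> u)"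
    using assms by (simp add: inner_diff_left inner_diff_right inner_commute)
  have nz: "(u - e) \<bullet> u \<noteq> 0" using ne eq by (metis mult_zero_right)
  have "2 * ((u - e) \<bullet> u) / ((u - e) \<bullet> (u - e)) = 1"
    unfolding eq using nz by (metis divide_self mult_eq_0_iff zero_neq_numeral)
  then show ?thesis by (simp only: refl_mv) simp
qed

definition diagm :: "('n \<Rightarrow> real) \<Rightarrow> real^'n^'n" where
  "diagm f = (\<chi> i j. if i = j then f i else 0)"
lemma diagm_mv: "diagm f *v w = (\<chi> i. f i * w$i)"
  by (simp add: diagm_def matrix_vector_mult_def vec_eq_iff if_distrib[where f="\<lambda>x. x * _"] sum.delta cong: if_cong)
lemma diagm_mult: "diagm f ** diagm g = diagm (\<lambda>i. f i * g i)"
  by (simp add: diagm_def matrix_matrix_mult_def vec_eq_iff if_distrib[where f="\<lambda>x. x * _"] sum.delta cong: if_cong)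
lemma diagm_transpose: "transpose (diagm f) = diagm f"
  by (simp add: diagm_def transpose_def vec_eq_iff)
lemma diagm_det: "det (diagm f) = prod f UNIV"
  by (subst det_diagonal) (simp_all add: diagm_def)
lemma diagm_one: "diagm (\<lambda>i. 1) = mat 1"
  by (simp add: diagm_def mat_def vec_eq_iff)

definition flipm :: "'n \<Rightarrow> real^'n^'n" where
  "flipm n = diagm (\<lambda>i. if i = n then -1 else 1)"

lemma flipm_mv: "flipm n *v w = (\<chi> i. if i = n then - (w$i) else w$i)"
  by (simp add: flipm_def diagm_mv vec_eq_iff)

lemma flipm_orth: "orthogonal_matrix (flipm n)"
proof -
  have e: "(\<lambda>i. (if i = n then -1 else 1) * (if i = n then -1 else 1::real)) = (\<lambda>i. 1)" by auto
  have "transpose (flipm n) ** flipm n = mat 1"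
    by (simp add: flipm_def diagm_transpose diagm_mult e diagm_one)
  then show ?thesis by (simp add: orthogonal_matrix)
qed

lemma flipm_det: "det (flipm n) = -1"
  unfolding flipm_def diagm_det by (subst prod.delta) auto

lemma transfer:
  fixes u v :: "real^'n"
  assumes uv: "orthonormal2 u v" and mn: "m \<noteq> n"
  shows "\<exists>q. orthogonal_matrix q \<and> det q = 1 \<and> q *v u = axis m 1 \<and>
              (q *v v = axis n 1 \<or> q *v v = - axis n 1)"
proof -
  let ?em = "axis m (1::real)" and ?en = "axis n (1::real)"
  have uu: "u \<bullet> u = 1" and vv: "v \<bullet> v = 1" and uv0: "u \<bullet> v = 0"
    using uv by (auto simp: orthonormal2_def)
  have emm: "?em \<bullet> ?em = 1" and enn: "?en \<bullet> ?en = 1" and emn: "?en \<bullet> ?em = 0"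
    using mn by (auto simp: inner_axis_axis)
  define r1 where "r1 = refl (u - ?em)"
  define w where "w = r1 *v v"
  define r2 where "r2 = refl (w - ?en)"
  have r1u: "r1 *v u = ?em" unfolding r1_def by (rule refl_map[OF uu emm])
  have ww: "w \<bullet> w = 1" unfolding w_def r1_def using vv by (simp add: orth_inner refl_orth)
  have wem: "w \<bullet> ?em = 0"
    unfolding w_def using r1u uv0 by (metis inner_commute orth_inner r1_def refl_orth)
  have r2w: "r2 *v w = ?en" unfolding r2_def by (rule refl_map[OF ww enn])
  have r2em: "r2 *v ?em = ?em" unfolding r2_def
    by (rule refl_fix) (simp add: inner_diff_left wem emn)
  define q0 where "q0 = r2 ** r1"
  have q0o: "orthogonal_matrix q0" unfolding q0_def r1_def r2_def
    by (simp add: orthogonal_matrix_mul refl_orth)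
  have q0u: "q0 *v u = ?em" unfolding q0_def
    by (simp add: matrix_vector_mul_assoc[symmetric] r1u r2em)
  have q0v: "q0 *v v = ?en" unfolding q0_def
    by (simp add: matrix_vector_mul_assoc[symmetric] w_def[symmetric] r2w)
  from det_orthogonal_matrix[OF q0o] show ?thesis
  proof
    assume "det q0 = 1"
    then show ?thesis using q0o q0u q0v by blast
  next
    assume d: "det q0 = -1"
    let ?q = "flipm n ** q0"
    have "orthogonal_matrix ?q" by (simp add: orthogonal_matrix_mul flipm_orth q0o)
    moreover have "det ?q = 1" by (simp add: det_mul flipm_det d)
    moreover have "?q *v u = ?em"
      using mn by (simp add: matrix_vector_mul_assoc[symmetric] q0u flipm_mv vec_eq_iff axis_def)
    moreover have "?q *v v = - ?en"
      by (simp add: matrix_vector_mul_assoc[symmetric] q0v flipm_mv vec_eq_iff axis_def)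
    ultimately show ?thesis by blast
  qed
qed

definition grp :: "(real^'n^'n) set \<Rightarrow> bool" where
  "grp G \<longleftrightarrow> is_subgroup_GL G \<and> SOn \<subseteq> G"

lemma grp_mul: "grp G \<Longrightarrow> A \<in> G \<Longrightarrow> B \<in> G \<Longrightarrow> A ** B \<in> G"
  by (simp add: grp_def is_subgroup_GL_def)

lemma grp_one: "grp G \<Longrightarrow> mat 1 \<in> G"
  by (simp add: grp_def is_subgroup_GL_def)

lemma grp_SO: "grp G \<Longrightarrow> orthogonal_matrix q \<Longrightarrow> det q = 1 \<Longrightarrow> q \<in> G"
  by (auto simp: grp_def SOn_def)

lemma grp_Rot: "grp G \<Longrightarrow> orthonormal2 u v \<Longrightarrow> Rot u v t \<in> G"
  by (simp add: grp_SO Rot_orth Rot_det)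

lemma angle_exists:
  fixes x y :: real
  shows "\<exists>t. x = sqrt (x^2 + y^2) * cos t \<and> y = sqrt (x^2 + y^2) * sin t"
proof (cases "x^2 + y^2 = 0")
  case True
  then have "x = 0" "y = 0" by (auto simp: add_nonneg_eq_0_iff)
  then show ?thesis by auto
next
  case False
  define r where "r = sqrt (x^2 + y^2)"
  have r0: "r > 0" using False unfolding r_def
    by (metis add_nonneg_nonneg real_sqrt_gt_zero zero_le_power2 order_le_less)
  have "(x/r)^2 + (y/r)^2 = 1"
    using r0 False by (simp add: r_def power_divide add_divide_distrib[symmetric])
  then obtain t where "x/r = cos t" "y/r = sin t"
    using sincos_total_2pi_le by blast
  then have "x = r * cos t" "y = r * sin t" using r0 by (auto simp: field_simps)
  then show ?thesis unfolding r_def by blast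
qed

definition alpha2 :: "real \<Rightarrow> real \<Rightarrow> real \<Rightarrow> real \<Rightarrow> real" where
  "alpha2 a b c d = sqrt (((a+d)/2)^2 + ((c-b)/2)^2)"
definition beta2 :: "real \<Rightarrow> real \<Rightarrow> real \<Rightarrow> real \<Rightarrow> real" where
  "beta2 a b c d = sqrt (((a-d)/2)^2 + ((b+c)/2)^2)"

lemma alpha_sq: "(alpha2 a b c d)^2 = ((a+d)/2)^2 + ((c-b)/2)^2"
  unfolding alpha2_def by (rule real_sqrt_pow2[OF add_nonneg_nonneg[OF zero_le_power2 zero_le_power2]])
lemma beta_sq: "(beta2 a b c d)^2 = ((a-d)/2)^2 + ((b+c)/2)^2"
  unfolding beta2_def by (rule real_sqrt_pow2[OF add_nonneg_nonneg[OF zero_le_power2 zero_le_power2]])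
lemma alpha_beta: "a*d - b*c = 1 \<Longrightarrow> (alpha2 a b c d)^2 = (beta2 a b c d)^2 + 1"
  unfolding alpha_sq beta_sq by (simp add: power2_eq_square field_simps)

lemma svd2:
  assumes "a*d - b*c = 1"
  shows "\<exists>x y. Em u v a b c d = Em u v
     ((alpha2 a b c d + beta2 a b c d) * cos x * cos y - (alpha2 a b c d - beta2 a b c d) * sin x * sin y)
     (- (alpha2 a b c d + beta2 a b c d) * cos x * sin y - (alpha2 a b c d - beta2 a b c d) * sin x * cos y)
     ((alpha2 a b c d + beta2 a b c d) * sin x * cos y + (alpha2 a b c d - beta2 a b c d) * cos x * sin y)
     (- (alpha2 a b c d + beta2 a b c d) * sin x * sin y + (alpha2 a b c d - beta2 a b c d) * cos x * cos y)"
proof -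
  define al where "al = alpha2 a b c d"
  define be where "be = beta2 a b c d"
  obtain p where p: "(a+d)/2 = al * cos p" "(c-b)/2 = al * sin p"
    using angle_exists[of "(a+d)/2" "(c-b)/2"] unfolding al_def alpha2_def by blast
  obtain q where q: "(a-d)/2 = be * cos q" "(b+c)/2 = be * sin q"
    using angle_exists[of "(a-d)/2" "(b+c)/2"] unfolding be_def beta2_def by blast
  define x where "x = (p + q)/2"
  define y where "y = (p - q)/2"
  have pxy: "p = x + y" unfolding x_def y_def by (simp add: field_simps)
  have qxy: "q = x - y" unfolding x_def y_def by (simp add: field_simps)
  have e1: "a = al * cos p + be * cos q" using p q by (simp add: field_simps)
  have e2: "b = - al * sin p + be * sin q" using p q by (simp add: field_simps)
  have e3: "c = al * sin p + be * sin q" using p q by (simp add: field_simps)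
  have e4: "d = al * cos p - be * cos q" using p q by (simp add: field_simps)
  show ?thesis
    unfolding al_def[symmetric] be_def[symmetric]
    apply (rule exI[of _ x], rule exI[of _ y])
    unfolding e1 e2 e3 e4 pxy qxy cos_add sin_add cos_diff sin_diff
    by (simp add: algebra_simps)
qed

lemma Rot_inv1: "orthonormal2 u v \<Longrightarrow> Em u v (cos x) (sin x) (- sin x) (cos x) ** Rot u v x = mat 1"
  by (simp add: Em_mult' Em_id power2_eq_square[symmetric] algebra_simps)
lemma Rot_inv2: "orthonormal2 u v \<Longrightarrow> Rot u v x ** Em u v (cos x) (sin x) (- sin x) (cos x) = mat 1"
  by (simp add: Em_mult' Em_id power2_eq_square[symmetric] algebra_simps)

lemma svd2_Rot:
  assumes "orthonormal2 u v" "a*d - b*c = 1"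
  shows "\<exists>x y. Em u v a b c d = Rot u v x ** Em u v (alpha2 a b c d + beta2 a b c d) 0 0 (alpha2 a b c d - beta2 a b c d) ** Rot u v y"
proof -
  obtain x y where e: "Em u v a b c d = Em u v
     ((alpha2 a b c d + beta2 a b c d) * cos x * cos y - (alpha2 a b c d - beta2 a b c d) * sin x * sin y)
     (- (alpha2 a b c d + beta2 a b c d) * cos x * sin y - (alpha2 a b c d - beta2 a b c d) * sin x * cos y)
     ((alpha2 a b c d + beta2 a b c d) * sin x * cos y + (alpha2 a b c d - beta2 a b c d) * cos x * sin y)
     (- (alpha2 a b c d + beta2 a b c d) * sin x * sin y + (alpha2 a b c d - beta2 a b c d) * cos x * cos y)"
    using svd2[OF assms(2)] by blast
  show ?thesis
    apply (rule exI[of _ x], rule exI[of _ y])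
    unfolding e Em_mult'[OF assms(1)]
    by (simp add: algebra_simps)
qed

lemma coset2:
  assumes G: "grp G" and uv: "orthonormal2 u v" and A: "Em u v a b c d \<in> G"
    and d1: "a*d - b*c = 1" and d2: "a'*d' - b'*c' = 1"
    and al: "alpha2 a b c d = alpha2 a' b' c' d'"
  shows "Em u v a' b' c' d' \<in> G"
proof -
  have "(beta2 a b c d)^2 = (beta2 a' b' c' d')^2"
    using alpha_beta[OF d1] alpha_beta[OF d2] al by simp
  then have be: "beta2 a b c d = beta2 a' b' c' d'"
    by (simp add: beta2_def)
  define D where "D = Em u v (alpha2 a b c d + beta2 a b c d) 0 0 (alpha2 a b c d - beta2 a b c d)"
  obtain x y where e: "Em u v a b c d = Rot u v x ** D ** Rot u v y"
    using svd2_Rot[OF uv d1] unfolding D_def by blast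
  obtain x' y' where e': "Em u v a' b' c' d' = Rot u v x' ** D ** Rot u v y'"
    using svd2_Rot[OF uv d2] unfolding D_def al be by blast
  have "D = Rot u v (-x) ** Em u v a b c d ** Rot u v (-y)"
  proof -
    have "Rot u v (-x) ** (Rot u v x ** D ** Rot u v y) ** Rot u v (-y)
       = (Rot u v (-x) ** Rot u v x) ** D ** (Rot u v y ** Rot u v (-y))"
      by (simp only: matrix_mul_assoc)
    then show ?thesis unfolding e by (simp add: Rot_inv1[OF uv] Rot_inv2[OF uv])
  qed
  then have "D \<in> G" using G A grp_Rot[OF G uv] grp_mul[OF G] by metis
  then show ?thesis unfolding e' using G by (simp add: grp_mul grp_Rot uv)
qed

lemma K_gt1:
  fixes r :: real
  assumes "r > 0" "r \<noteq> 1"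
  shows "((r^2 + 1/r^2)/2)^2 > 1"
proof -
  have "r \<noteq> 1/r"
  proof
    assume "r = 1/r"
    then have "r * r = 1" using assms by (simp add: field_simps)
    then show False using assms
      by (metis abs_of_pos abs_mult_self_eq mult_cancel_left1 mult_le_cancel_left1 order_less_irrefl
          less_eq_real_def nle_le)
  qed
  then have "(r - 1/r)^2 > 0" by simp
  moreover have "r^2 + 1/r^2 = (r - 1/r)^2 + 2"
    using assms by (simp add: power2_eq_square field_simps)
  ultimately have "(r^2 + 1/r^2)/2 > 1" by simp
  then show ?thesis
    by (metis less_trans one_less_power pos2 power_one_right)
qed

lemma transv_small:
  assumes G: "grp G" and uv: "orthonormal2 u v" and r: "r > 0" "r \<noteq> 1"
    and D: "Em u v r 0 0 (1/r) \<in> G"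
    and c0: "\<bar>c0\<bar> \<le> 2 * sqrt (((r^2 + 1/r^2)/2)^2 - 1)"
  shows "Em u v 1 c0 0 1 \<in> G"
proof -
  define K where "K = ((r^2 + 1/r^2)/2)^2"
  have K1: "K > 1" unfolding K_def by (rule K_gt1[OF r])
  have sK: "sqrt (K - 1) > 0" using K1 by simp
  define p where "p = \<bar>c0\<bar> / (2 * sqrt (K - 1))"
  have p0: "0 \<le> p" unfolding p_def using sK by simp
  have p1: "p \<le> 1" unfolding p_def using sK c0 unfolding K_def[symmetric] by (simp add: field_simps)
  have psq: "p^2 * (K - 1) = c0^2 / 4"
    unfolding p_def using sK K1 by (simp add: power_divide power_mult_distrib field_simps)
  define q where "q = sqrt (1 - p^2)"
  have "p^2 \<le> 1" using p0 p1 by (simp add: power_le_one)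
  then have pq: "p^2 + q^2 = 1" unfolding q_def by simp
  obtain t where t: "p = cos t" "q = sin t" using sincos_total_2pi_le[OF pq] by blast
  define M where "M = Em u v r 0 0 (1/r) ** Rot u v t ** Em u v r 0 0 (1/r)"
  have MG: "M \<in> G" unfolding M_def using G D grp_Rot[OF G uv] by (simp add: grp_mul)
  have Me: "M = Em u v (r^2 * p) (- q) q (p / r^2)"
    unfolding M_def Em_mult'[OF uv] t[symmetric] using r by (simp add: power2_eq_square field_simps)
  show ?thesis
  proof (rule coset2[OF G uv MG[unfolded Me]])
    show "r\<^sup>2 * p * (p / r\<^sup>2) - - q * q = 1" using r pq by (simp add: power2_eq_square field_simps)
    show "1 * 1 - c0 * 0 = (1::real)" by simp
    have "((r^2 * p + p / r^2) / 2)^2 + ((q - - q) / 2)^2 = p^2 * K + q^2"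
      unfolding K_def using r by (simp add: power2_eq_square field_simps)
    also have "\<dots> = ((1 + 1) / 2)^2 + ((0 - c0) / 2)^2"
      using psq pq by (simp add: power2_eq_square algebra_simps)
    finally show "alpha2 (r\<^sup>2 * p) (- q) q (p / r\<^sup>2) = alpha2 1 c0 0 1"
      unfolding alpha2_def by simp
  qed
qed

lemma transv_all:
  assumes G: "grp G" and uv: "orthonormal2 u v" and r: "r > 0" "r \<noteq> 1"
    and D: "Em u v r 0 0 (1/r) \<in> G"
  shows "Em u v 1 c 0 1 \<in> G"
proof -
  define e where "e = 2 * sqrt (((r^2 + 1/r^2)/2)^2 - 1)"
  have e0: "e > 0" unfolding e_def using K_gt1[OF r] by simp
  have small: "\<bar>c\<bar> \<le> e \<Longrightarrow> Em u v 1 c 0 1 \<in> G" for c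
    using transv_small[OF G uv r D] unfolding e_def by blast
  have add: "Em u v 1 c 0 1 ** Em u v 1 c' 0 1 = Em u v 1 (c + c') 0 1" for c c'
    by (simp add: Em_mult'[OF uv] algebra_simps)
  have ind: "\<forall>c. \<bar>c\<bar> \<le> real N * e \<longrightarrow> Em u v 1 c 0 1 \<in> G" for N
  proof (induction N)
    case 0
    then show ?case using grp_one[OF G] by (auto simp: Em_id)
  next
    case (Suc N)
    show ?case
    proof (intro allI impI)
      fix c assume c: "\<bar>c\<bar> \<le> real (Suc N) * e"
      define c2 where "c2 = c / real (Suc N)"
      define c1 where "c1 = c * real N / real (Suc N)"
      have "c1 + c2 = c * (real N + 1) / real (Suc N)"
        unfolding c1_def c2_def by (simp add: add_divide_distrib[symmetric] algebra_simps)
      moreover have "c * (real N + 1) / real (Suc N) = c"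
        by (simp add: add.commute)
      ultimately have cc: "c = c1 + c2" by simp
      have "\<bar>c2\<bar> \<le> e" unfolding c2_def using c by (simp add: field_simps abs_divide)
      moreover have "\<bar>c1\<bar> \<le> real N * e"
      proof -
        have "\<bar>c1\<bar> = \<bar>c\<bar> * real N / real (Suc N)" unfolding c1_def by (simp add: abs_mult abs_divide)
        also have "\<dots> \<le> real (Suc N) * e * real N / real (Suc N)"
          using c by (intro divide_right_mono mult_right_mono) auto
        also have "\<dots> = real N * e" by simp
        finally show ?thesis .
      qed
      ultimately show "Em u v 1 c 0 1 \<in> G"
        using Suc.IH small add[of c1 c2] grp_mul[OF G] cc by metis
    qed
  qed
  obtain N where "\<bar>c\<bar> \<le> real N * e"
    using e0 by (metis real_arch_simple less_eq_real_def mult.commute pos_divide_le_eq)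
  then show ?thesis using ind by blast
qed

lemma quad_zero:
  fixes sv B :: real
  assumes "\<forall>t. 2 * t * sv + t^2*B \<le> 0"
  shows "sv = 0"
proof (rule ccontr)
  assume sv: "sv \<noteq> 0"
  define m where "m = \<bar>B\<bar> + 1"
  have m0: "m > 0" unfolding m_def by simp
  have le: "2*(sv/m) * sv + (sv/m)^2*B \<le> 0" using assms by blast
  have eq: "(2*(sv/m) * sv + (sv/m)^2*B) * m^2 = sv^2*(2*m + B)"
    using m0 by (simp add: power2_eq_square field_simps)
  have "sv^2*(2*m + B) > 0" using sv unfolding m_def by (intro mult_pos_pos) auto
  moreover have "(2*(sv/m) * sv + (sv/m)^2*B) * m^2 \<le> 0"
    using le m0 by (simp add: mult_nonpos_nonneg)
  ultimately show False using eq by simp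
qed

definition Qf :: "real^'n^'n \<Rightarrow> real^'n \<Rightarrow> real^'n \<Rightarrow> real" where
  "Qf g a b = (g *v a) \<bullet> (g *v b)"

lemma Qf_sym: "Qf g a b = Qf g b a"
  by (simp add: Qf_def inner_commute)

lemma Qf_add2: "Qf g a (b + c) = Qf g a b + Qf g a c"
  by (simp add: Qf_def matrix_vector_right_distrib inner_add_right)
lemma Qf_scale2: "Qf g a (t *\<^sub>R b) = t * Qf g a b"
  by (simp add: Qf_def matrix_vector_mult_scaleR)
lemma Qf_add1: "Qf g (b + c) a = Qf g b a + Qf g c a"
  by (simp add: Qf_def matrix_vector_right_distrib inner_add_left)
lemma Qf_scale1: "Qf g (t *\<^sub>R b) a = t * Qf g b a"
  by (simp add: Qf_def matrix_vector_mult_scaleR)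
lemma Qf_diff2: "Qf g a (b - c) = Qf g a b - Qf g a c"
  by (simp add: Qf_def matrix_vector_mult_diff_distrib inner_diff_right)

lemma crit_core:
  fixes g :: "real^'n^'n"
  assumes sig: "\<sigma> \<noteq> 0"
    and hom: "\<And>w. w \<noteq> 0 \<Longrightarrow> \<sigma> * Qf g w w \<le> \<sigma> * Qf g x x * (w \<bullet> w)"
    and x1: "x \<bullet> x = 1" and xz: "x \<bullet> z = 0"
  shows "Qf g x z = 0"
proof -
  have "\<forall>t. 2*t*(\<sigma> * Qf g x z) + t^2*(\<sigma> * (Qf g z z - Qf g x x * (z \<bullet> z))) \<le> 0"
  proof
    fix t :: real
    define w where "w = x + t *\<^sub>R z"
    have ww: "w \<bullet> w = 1 + t^2 * (z \<bullet> z)"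
      unfolding w_def using x1 xz by (simp add: inner_add_left inner_add_right inner_commute power2_eq_square)
    have "w \<noteq> 0"
    proof
      assume "w = 0"
      then have "w \<bullet> w = 0" by simp
      moreover have "t^2 * (z \<bullet> z) \<ge> 0" by simp
      ultimately show False using ww by linarith
    qed
    then have "\<sigma> * Qf g w w \<le> \<sigma> * Qf g x x * (w \<bullet> w)" by (rule hom)
    moreover have "Qf g w w = Qf g x x + 2*t*Qf g x z + t^2 * Qf g z z"
      unfolding w_def by (simp add: Qf_add1 Qf_add2 Qf_scale1 Qf_scale2 Qf_sym[of g z x] power2_eq_square algebra_simps)
    ultimately show "2*t*(\<sigma> * Qf g x z) + t^2*(\<sigma> * (Qf g z z - Qf g x x * (z \<bullet> z))) \<le> 0"
      unfolding ww by (simp add: algebra_simps)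
  qed
  then have "\<sigma> * Qf g x z = 0" by (rule quad_zero)
  then show ?thesis using sig by simp
qed

lemma hom_from_sphere:
  fixes g :: "real^'n^'n"
  assumes "\<forall>y. norm y = 1 \<longrightarrow> \<sigma> * Qf g y y \<le> \<sigma> * Qf g x x" and "w \<noteq> 0"
  shows "\<sigma> * Qf g w w \<le> \<sigma> * Qf g x x * (w \<bullet> w)"
proof -
  define y where "y = (1 / norm w) *\<^sub>R w"
  have "norm y = 1" unfolding y_def using assms(2) by simp
  then have le: "\<sigma> * Qf g y y \<le> \<sigma> * Qf g x x" using assms(1) by blast
  have "Qf g y y = Qf g w w / (w \<bullet> w)"
    unfolding y_def Qf_scale1 Qf_scale2 using assms(2)
    by (simp add: power2_norm_eq_inner[symmetric] power2_eq_square)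
  moreover have "w \<bullet> w > 0" using assms(2) by simp
  ultimately show ?thesis using le by (simp add: field_simps)
qed

lemma Qf_eig:
  fixes g :: "real^'n^'n"
  assumes sig: "\<sigma> \<noteq> 0" and x1: "norm x = 1"
    and ext: "\<forall>y. norm y = 1 \<longrightarrow> \<sigma> * Qf g y y \<le> \<sigma> * Qf g x x"
  shows "Qf g x z = (x \<bullet> z) * Qf g x x"
proof -
  have xx: "x \<bullet> x = 1" using x1 by (simp add: norm_eq_1)
  have "Qf g x (z - (x \<bullet> z) *\<^sub>R x) = 0"
    by (rule crit_core[OF sig hom_from_sphere[OF ext] xx]) (simp_all add: inner_diff_right xx)
  then show ?thesis by (simp add: Qf_diff2 Qf_scale2)
qed

lemma grp_inv: "grp G \<Longrightarrow> A \<in> G \<Longrightarrow> matrix_inv A \<in> G"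
  by (simp add: grp_def is_subgroup_GL_def)

lemma grp_invertible: "grp G \<Longrightarrow> A \<in> G \<Longrightarrow> invertible A"
  by (auto simp: grp_def is_subgroup_GL_def GLn_def)

lemma matrix_inv_props:
  assumes "invertible (A::real^'n^'n)"
  shows "A ** matrix_inv A = mat 1" "matrix_inv A ** A = mat 1"
proof -
  have "\<exists>A'. A ** A' = mat 1 \<and> A' ** A = mat 1" using assms by (simp add: invertible_def)
  then have "A ** matrix_inv A = mat 1 \<and> matrix_inv A ** A = mat 1"
    unfolding matrix_inv_def by (rule someI_ex)
  then show "A ** matrix_inv A = mat 1" "matrix_inv A ** A = mat 1" by auto
qed

lemma Qf_norm: "Qf g x x = (norm (g *v x))^2"
  by (simp add: Qf_def power2_norm_eq_inner)

lemma cont_Qf: "continuous_on S (\<lambda>y. Qf g y y)"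
  unfolding Qf_def
proof -
  have "continuous_on S ((*v) g)" by (rule linear_continuous_on) (rule matrix_vector_mul_bounded_linear)
  then show "continuous_on S (\<lambda>y. (g *v y) \<bullet> (g *v y))" by (intro continuous_intros)
qed

definition confm :: "real^'n^'n \<Rightarrow> bool" where
  "confm g \<longleftrightarrow> (\<forall>x y. norm x = norm y \<longrightarrow> norm (g *v x) = norm (g *v y))"

lemma start:
  fixes g :: "real^'n^'n"
  assumes G: "grp G" and gG: "g \<in> G" and nc: "\<not> confm g"
  shows "\<exists>u v r. orthonormal2 u v \<and> r > 0 \<and> r \<noteq> 1 \<and> Em u v r 0 0 (1/r) \<in> G"
proof -
  define gi where "gi = matrix_inv g"
  have giG: "gi \<in> G" unfolding gi_def using G gG by (rule grp_inv)
  have ggi: "g ** gi = mat 1" "gi ** g = mat 1"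
    unfolding gi_def using matrix_inv_props[OF grp_invertible[OF G gG]] by auto
  define S :: "(real^'n) set" where "S = sphere 0 1"
  obtain i :: 'n where True by simp
  have "axis i (1::real) \<in> S" unfolding S_def by simp
  then have Sne: "S \<noteq> {}" by blast
  have Sc: "compact S" unfolding S_def by simp
  obtain x where xS: "x \<in> S" and xmax: "\<forall>y\<in>S. Qf g y y \<le> Qf g x x"
    using continuous_attains_sup[OF Sc Sne cont_Qf] by blast
  obtain y where yS: "y \<in> S" and ymin: "\<forall>z\<in>S. Qf g y y \<le> Qf g z z"
    using continuous_attains_inf[OF Sc Sne cont_Qf] by blast
  have x1: "norm x = 1" and y1: "norm y = 1" using xS yS by (auto simp: S_def)
  have xx: "x \<bullet> x = 1" and yy: "y \<bullet> y = 1" using x1 y1 by (auto simp: norm_eq_1)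
  have neq: "Qf g y y < Qf g x x"
  proof (rule ccontr)
    assume "\<not> Qf g y y < Qf g x x"
    then have const: "\<And>z. norm z = 1 \<Longrightarrow> Qf g z z = Qf g x x"
      using xmax ymin unfolding S_def by (metis dist_0_norm mem_sphere antisym not_less order_trans)
    have "confm g"
      unfolding confm_def
    proof (intro allI impI)
      fix a b :: "real^'n" assume ab: "norm a = norm b"
      show "norm (g *v a) = norm (g *v b)"
      proof (cases "a = 0")
        case True
        then have "b = 0" using ab by simp
        then show ?thesis using True by simp
      next
        case False
        define \<rho> where "\<rho> = norm a"
        have r0: "\<rho> > 0" using False unfolding \<rho>_def by simp
        have "\<And>c. norm c = \<rho> \<Longrightarrow> Qf g c c = \<rho>^2 * Qf g x x"
        proof -
          fix c :: "real^'n" assume c: "norm c = \<rho>"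
          have "norm ((1/\<rho>) *\<^sub>R c) = 1" using c r0 by simp
          then have "Qf g ((1/\<rho>) *\<^sub>R c) ((1/\<rho>) *\<^sub>R c) = Qf g x x" by (rule const)
          then show "Qf g c c = \<rho>^2 * Qf g x x"
            using r0 by (simp add: Qf_scale1 Qf_scale2 power2_eq_square field_simps)
        qed
        then have "Qf g a a = Qf g b b" using ab \<rho>_def by metis
        then show ?thesis unfolding Qf_norm by (simp add: power2_eq_iff_nonneg)
      qed
    qed
    then show False using nc by simp
  qed
  have eigx: "\<And>z. Qf g x z = (x \<bullet> z) * Qf g x x"
    by (rule Qf_eig[of 1]) (use x1 xmax in \<open>auto simp: S_def\<close>)
  have eigy: "\<And>z. Qf g y z = (y \<bullet> z) * Qf g y y"
    by (rule Qf_eig[of "-1"]) (use y1 ymin in \<open>auto simp: S_def\<close>)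
  have "(x \<bullet> y) * Qf g x x = (x \<bullet> y) * Qf g y y"
    using eigx[of y] eigy[of x] by (simp add: Qf_sym inner_commute)
  then have xy: "x \<bullet> y = 0" using neq by simp
  have oxy: "orthonormal2 x y" using xx yy xy by (simp add: orthonormal2_def)
  have gy0: "g *v y \<noteq> 0"
  proof
    assume "g *v y = 0"
    then have "gi *v (g *v y) = 0" by simp
    then have "y = 0" by (simp add: matrix_vector_mul_assoc ggi)
    then show False using y1 by simp
  qed
  have Qyy: "Qf g y y > 0" using gy0 by (simp add: Qf_def)
  define a where "a = norm (g *v x)"
  define b where "b = norm (g *v y)"
  have a2: "a^2 = Qf g x x" and b2: "b^2 = Qf g y y" unfolding a_def b_def Qf_norm by auto
  have a2': "(g *v x) \<bullet> (g *v x) = a * a" and b2': "(g *v y) \<bullet> (g *v y) = b * b"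
    using a2 b2 by (simp_all add: Qf_def power2_eq_square)
  have b0: "b > 0" unfolding b_def using gy0 by simp
  have a0: "a > 0" using a2 b2 neq Qyy unfolding a_def by auto
  define u where "u = (1/a) *\<^sub>R (g *v x)"
  define v where "v = (1/b) *\<^sub>R (g *v y)"
  have gx: "g *v x = a *\<^sub>R u" and gyv: "g *v y = b *\<^sub>R v" unfolding u_def v_def using a0 b0 by auto
  have uv: "orthonormal2 u v"
    unfolding orthonormal2_def u_def v_def using a0 b0 a2 b2 eigx[of y] xy neq Qyy
    by (simp add: Qf_def[symmetric] power2_eq_square)
  define k where "k = Rot x y (pi/2)"
  have kG: "k \<in> G" unfolding k_def using G oxy by (rule grp_Rot)
  have ke: "k = Em x y 0 (-1) 1 0" unfolding k_def by simp
  define h where "h = g ** k ** gi"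
  have hG: "h \<in> G" unfolding h_def using G gG kG giG by (simp add: grp_mul)
  have he: "h = Em u v 0 (-(a/b)) (b/a) 0"
  proof (rule iffD2[OF matrix_eq], rule allI)
    fix w :: "real^'n"
    define z where "z = gi *v w"
    have wz: "w = g *v z" unfolding z_def by (simp add: matrix_vector_mul_assoc ggi)
    have uw: "u \<bullet> w = (x \<bullet> z) * a" unfolding u_def wz
      using eigx[of z] a0 by (simp add: Qf_def a2')
    have vw: "v \<bullet> w = (y \<bullet> z) * b" unfolding v_def wz
      using eigy[of z] b0 by (simp add: Qf_def b2')
    have "h *v w = g *v (k *v z)"
    proof -
      have "g ** k ** gi ** g = g ** k ** (gi ** g)" by (simp only: matrix_mul_assoc)
      then show ?thesis unfolding h_def wz by (simp add: matrix_vector_mul_assoc ggi)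
    qed
    also have "\<dots> = w + (- ((x \<bullet> z) + (y \<bullet> z)) * a) *\<^sub>R u + (((x \<bullet> z) - (y \<bullet> z)) * b) *\<^sub>R v"
      unfolding ke Em_mv wz
      by (simp add: matrix_vector_right_distrib matrix_vector_mult_scaleR gx gyv algebra_simps)
    also have "\<dots> = Em u v 0 (-(a/b)) (b/a) 0 *v w"
      unfolding Em_mv uw vw by (rule coeff_eq2) (use a0 b0 in \<open>simp_all add: field_simps\<close>)
    finally show "h *v w = Em u v 0 (-(a/b)) (b/a) 0 *v w" .
  qed
  have RG: "Rot u v (- (pi/2)) \<in> G" using G uv by (rule grp_Rot)
  have "Rot u v (- (pi/2)) ** h = Em u v (b/a) 0 0 (a/b)"
    unfolding he Em_mult'[OF uv] by simp
  then have "Em u v (b/a) 0 0 (1/(b/a)) \<in> G"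
    using grp_mul[OF G RG hG] by simp
  moreover have "b/a > 0" using a0 b0 by simp
  moreover have "b/a \<noteq> 1"
  proof
    assume "b/a = 1"
    then have "b = a" using a0 by simp
    then show False using a2 b2 neq by simp
  qed
  ultimately show ?thesis using uv by blast
qed

lemma diagm_left: "(diagm d ** A) $ i $ j = d i * A $ i $ j"
  by (simp add: diagm_def matrix_matrix_mult_def if_distrib[where f="\<lambda>x. x * _"] sum.delta cong: if_cong)

lemma diagm_right: "(A ** diagm d) $ i $ j = A $ i $ j * d j"
  by (simp add: diagm_def matrix_matrix_mult_def if_distrib[where f="\<lambda>x. _ * x"] sum.delta' cong: if_cong)

lemma axis_orthonormal2: "m \<noteq> n \<Longrightarrow> orthonormal2 (axis m (1::real)) (axis n 1)"
  by (simp add: orthonormal2_def inner_axis_axis)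

lemma Em_swap: "Em u v a b c d = Em v u d c b a"
  by (simp add: vec_eq_iff Em_entry algebra_simps)

lemma transv_eq: "m \<noteq> n \<Longrightarrow> (\<chi> i j. if i = m \<and> j = n then c else of_bool (i = j)) = Em (axis m 1) (axis n 1) 1 c 0 1"
  by (auto simp: vec_eq_iff Em_entry axis_def)

lemma diagB_eq: "m \<noteq> n \<Longrightarrow> Em (axis m 1) (axis n 1) t 0 0 (1/t) = diagm (\<lambda>i. if i = m then t else if i = n then 1/t else 1)"
  by (auto simp: vec_eq_iff Em_entry axis_def diagm_def)

lemma std_transv:
  assumes G: "grp G" and uv: "orthonormal2 u v" and T: "\<forall>c. Em u v 1 c 0 1 \<in> G" and mn: "m \<noteq> n"
  shows "Em (axis m 1) (axis n 1) 1 c 0 1 \<in> G"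
proof -
  obtain q where qo: "orthogonal_matrix q" and qd: "det q = 1" and qu: "q *v u = axis m 1"
    and qv: "q *v v = axis n 1 \<or> q *v v = - axis n 1"
    using transfer[OF uv mn] by blast
  have qG: "q \<in> G" and qtG: "transpose q \<in> G" using G qo qd by (simp_all add: grp_SO)
  have conj: "Em (axis m 1) (q *v v) 1 c' 0 1 \<in> G" for c'
  proof -
    have "q ** Em u v 1 c' 0 1 ** transpose q \<in> G" using G qG qtG T by (simp add: grp_mul)
    then show ?thesis unfolding Em_conj[OF qo] qu .
  qed
  from qv show ?thesis
  proof
    assume "q *v v = axis n 1" then show ?thesis using conj[of c] by simp
  next
    assume "q *v v = - axis n 1" then show ?thesis using conj[of "-c"] by (simp add: Em_neg2)
  qed
qed

lemma diagB:
  assumes G: "grp G" and T: "\<forall>m n c. m \<noteq> n \<longrightarrow> Em (axis m 1) (axis n 1) 1 c 0 1 \<in> G"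
    and mn: "m \<noteq> n" and t: "t \<noteq> 0"
  shows "Em (axis m 1) (axis n 1) t 0 0 (1/t) \<in> G"
proof -
  let ?E = "Em (axis m (1::real)) (axis n 1)"
  have uv: "orthonormal2 (axis m (1::real)) (axis n 1)" using mn by (rule axis_orthonormal2)
  have t1: "?E 1 t 0 1 \<in> G" using T mn by blast
  have t2: "?E 1 0 (-1/t) 1 \<in> G" using T mn by (subst Em_swap) auto
  have r: "?E 0 (-1) 1 0 \<in> G" using grp_Rot[OF G uv, of "pi/2"] by simp
  have "?E 1 t 0 1 ** ?E 1 0 (-1/t) 1 ** ?E 1 t 0 1 ** ?E 0 (-1) 1 0 = ?E t 0 0 (1/t)"
    unfolding Em_mult'[OF uv] using t by (simp add: field_simps)
  moreover have "?E 1 t 0 1 ** ?E 1 0 (-1/t) 1 ** ?E 1 t 0 1 ** ?E 0 (-1) 1 0 \<in> G"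
    using t1 t2 r G by (simp add: grp_mul)
  ultimately show ?thesis by simp
qed

lemma diag_all:
  fixes d :: "'n::finite \<Rightarrow> real"
  assumes G: "grp G"
    and B: "\<And>m n t. m \<noteq> n \<Longrightarrow> t \<noteq> 0 \<Longrightarrow> diagm (\<lambda>i. if i = m then t else if i = n then 1/t else (1::real)) \<in> (G :: (real^'n^'n) set)"
    and p: "prod d UNIV = 1"
  shows "diagm d \<in> G"
proof -
  obtain f :: 'n where True by simp
  have main: "\<forall>d::'n \<Rightarrow> real. (\<forall>i. i \<notin> K \<longrightarrow> i \<noteq> f \<longrightarrow> d i = 1) \<longrightarrow> prod d UNIV = 1 \<longrightarrow> diagm d \<in> G"
    if "finite K" for K
    using that
  proof (induction K rule: finite_induct)
    case empty
    show ?case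
    proof (intro allI impI)
      fix d :: "'n \<Rightarrow> real"
      assume d1: "\<forall>i. i \<notin> {} \<longrightarrow> i \<noteq> f \<longrightarrow> d i = 1" and p: "prod d UNIV = 1"
      have "prod d UNIV = d f * prod d (UNIV - {f})" by (simp add: prod.remove)
      also have "prod d (UNIV - {f}) = 1" using d1 by (intro prod.neutral) auto
      finally have "d f = 1" using p by simp
      then have "d = (\<lambda>i. 1)" using d1 by (auto simp: fun_eq_iff)
      then show "diagm d \<in> G" using grp_one[OF G] by (simp add: diagm_one)
    qed
  next
    case (insert k K)
    show ?case
    proof (intro allI impI)
      fix d :: "'n \<Rightarrow> real"
      assume d1: "\<forall>i. i \<notin> insert k K \<longrightarrow> i \<noteq> f \<longrightarrow> d i = 1" and p: "prod d UNIV = 1"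
      show "diagm d \<in> G"
      proof (cases "k = f")
        case True
        have "\<forall>i. i \<notin> K \<longrightarrow> i \<noteq> f \<longrightarrow> d i = 1" using d1 True by blast
        then show ?thesis using insert.IH p by blast
      next
        case False
        have dk: "d k \<noteq> 0"
        proof
          assume "d k = 0"
          then have "prod d UNIV = 0" by (intro prod_zero) auto
          then show False using p by simp
        qed
        define d' where "d' = (\<lambda>i. if i = k then 1 else if i = f then d f * d k else d i)"
        define e where "e = (\<lambda>i. if i = k then d k else if i = f then 1 / d k else (1::real))"
        have de: "d = (\<lambda>i. d' i * e i)" unfolding d'_def e_def using dk False by (auto simp: fun_eq_iff)
        have e2: "e = (\<lambda>i. (if i = k then d k else 1) * (if i = f then 1 / d k else 1))"
          unfolding e_def using False by (auto simp: fun_eq_iff)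
        have pe: "prod e UNIV = 1"
          unfolding e2 prod.distrib using dk by (simp add: prod.delta)
        have "prod d UNIV = prod d' UNIV * prod e UNIV"
          by (subst de) (rule prod.distrib)
        then have pd': "prod d' UNIV = 1" using p pe by simp
        have d'1: "\<forall>i. i \<notin> K \<longrightarrow> i \<noteq> f \<longrightarrow> d' i = 1" using d1 unfolding d'_def by auto
        have "diagm d' \<in> G" using insert.IH d'1 pd' by blast
        moreover have "diagm e \<in> G" unfolding e_def using B[OF False dk] .
        ultimately have "diagm d' ** diagm e \<in> G" using G by (simp add: grp_mul)
        then show ?thesis by (subst de) (simp add: diagm_mult)
      qed
    qed
  qed
  show ?thesis using main[of UNIV] p by simp
qed

lemma det_transv:
  fixes m n :: "'n::finite"
  assumes "m \<noteq> n"
  shows "det ((\<chi> i j. if i = m \<and> j = n then c else of_bool (i = j)) :: real^'n^'n) = 1"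
proof -
  have "(\<chi> i j. if i = m \<and> j = n then c else of_bool (i = j)) =
        (\<chi> k. if k = m then row m (mat 1) + c *s row n (mat 1) else row k (mat 1 :: real^'n^'n))"
    using assms by (auto simp: vec_eq_iff row_def mat_def)
  then show ?thesis using det_row_operation[OF assms, of "mat 1" c] by simp
qed

lemma swapJ:
  fixes m n :: "'n::finite"
  assumes "m \<noteq> n"
  shows "(\<chi> i j. mat 1 $ i $ Transposition.transpose m n j) ** flipm n = Em (axis m (1::real)) (axis n 1) 0 (-1) 1 0"
  using assms unfolding flipm_def
  by (auto simp: vec_eq_iff diagm_right Em_entry axis_def mat_def Transposition.transpose_def)

lemma diag_swap:
  fixes m n :: "'n::finite"
  shows "diagm d ** (\<chi> i j. mat 1 $ i $ Transposition.transpose m n j) =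
         (\<chi> i j. mat 1 $ i $ Transposition.transpose m n j) ** diagm (\<lambda>i. d (Transposition.transpose m n i)) "
  by (auto simp: vec_eq_iff diagm_right diagm_left mat_def Transposition.transpose_def)

lemma flipm_sq: "flipm n ** flipm n = mat 1"
  using flipm_orth[of n] by (simp add: orthogonal_matrix_def flipm_def diagm_transpose)

lemma diag_transv:
  fixes m n :: "'n::finite"
  assumes "m \<noteq> n" "d n \<noteq> 0"
  shows "diagm d ** (\<chi> i j. if i = m \<and> j = n then c else of_bool (i = j)) =
         (\<chi> i j. if i = m \<and> j = n then d m * c / d n else of_bool (i = j)) ** diagm d"
  using assms by (auto simp: vec_eq_iff diagm_right diagm_left)

definition Pp :: "(real^'n^'n) set \<Rightarrow> real^'n^'n \<Rightarrow> bool" where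
  "Pp G A \<longleftrightarrow> det A = 0 \<or> (\<forall>s d. s \<in> G \<and> det s = 1 \<and> (\<forall>i. d i \<noteq> 0) \<longrightarrow>
      (\<exists>s' d'. s' \<in> G \<and> det s' = 1 \<and> (\<forall>i. d' i \<noteq> 0) \<and> s ** diagm d ** A = s' ** diagm d'))"

lemma SL_in:
  fixes A :: "real^'n::finite^'n"
  assumes G: "grp G"
    and T: "\<And>m n c. m \<noteq> n \<Longrightarrow> (\<chi> i j. if i = m \<and> j = n then c else of_bool (i = j)) \<in> G"
    and D: "\<And>d. prod d UNIV = 1 \<Longrightarrow> diagm d \<in> G"
    and detA: "det A = 1"
  shows "A \<in> G"
proof -
  have "Pp G A"
  proof (rule induct_matrix_elementary)
    fix A B :: "real^'n^'n"
    assume PA: "Pp G A" and PB: "Pp G B"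
    show "Pp G (A ** B)"
    proof (cases "det (A ** B) = 0")
      case True then show ?thesis by (simp add: Pp_def)
    next
      case False
      then have a0: "det A \<noteq> 0" and b0: "det B \<noteq> 0" by (auto simp: det_mul)
      show ?thesis unfolding Pp_def
      proof (intro disjI2 allI impI)
        fix s and d :: "'n \<Rightarrow> real" assume sd: "s \<in> G \<and> det s = 1 \<and> (\<forall>i. d i \<noteq> (0::real))"
        obtain s1 and d1 :: "'n \<Rightarrow> real" where 1: "s1 \<in> G" "det s1 = 1" "\<forall>i. d1 i \<noteq> 0" "s ** diagm d ** A = s1 ** diagm d1"
          using PA a0 sd unfolding Pp_def by blast
        obtain s2 and d2 :: "'n \<Rightarrow> real" where 2: "s2 \<in> G" "det s2 = 1" "\<forall>i. d2 i \<noteq> 0" "s1 ** diagm d1 ** B = s2 ** diagm d2"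
          using PB b0 1 unfolding Pp_def by blast
        have "s ** diagm d ** (A ** B) = s2 ** diagm d2"
          by (metis 1(4) 2(4) matrix_mul_assoc)
        then show "\<exists>s' d'. s' \<in> G \<and> det s' = 1 \<and> (\<forall>i. d' i \<noteq> 0) \<and> s ** diagm d ** (A ** B) = s' ** diagm d'"
          using 2 by blast
      qed
    qed
  next
    fix A :: "real^'n^'n" and i assume "row i A = 0"
    then show "Pp G A" by (simp add: Pp_def det_zero_row)
  next
    fix A :: "real^'n^'n" assume diag: "\<And>i j. i \<noteq> j \<Longrightarrow> A $ i $ j = 0"
    show "Pp G A"
    proof (cases "det A = 0")
      case True then show ?thesis by (simp add: Pp_def)
    next
      case False
      have Ae: "A = diagm (\<lambda>i. A $ i $ i)" using diag by (auto simp: vec_eq_iff diagm_def)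
      have "prod (\<lambda>i. A $ i $ i) UNIV \<noteq> 0" using False Ae diagm_det by metis
      then have nz: "\<forall>i. A $ i $ i \<noteq> 0" by (simp add: prod_zero_iff)
      show ?thesis unfolding Pp_def
      proof (intro disjI2 allI impI)
        fix s and d :: "'n \<Rightarrow> real" assume sd: "s \<in> G \<and> det s = 1 \<and> (\<forall>i. d i \<noteq> (0::real))"
        have "s ** diagm d ** A = s ** diagm (\<lambda>i. d i * A $ i $ i)"
          by (subst Ae) (simp add: matrix_mul_assoc[symmetric] diagm_mult)
        then show "\<exists>s' d'. s' \<in> G \<and> det s' = 1 \<and> (\<forall>i. d' i \<noteq> 0) \<and> s ** diagm d ** A = s' ** diagm d'"
          using sd nz by (intro exI[of _ s] exI[of _ "\<lambda>i. d i * A $ i $ i"]) auto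
      qed
    qed
  next
    fix m n :: 'n assume mn: "m \<noteq> n"
    let ?S = "(\<chi> i j. mat 1 $ i $ Transposition.transpose m n j) :: real^'n^'n"
    show "Pp G ?S" unfolding Pp_def
    proof (intro disjI2 allI impI)
      fix s and d :: "'n \<Rightarrow> real" assume sd: "s \<in> G \<and> det s = 1 \<and> (\<forall>i. d i \<noteq> (0::real))"
      define W where "W = ?S ** flipm n"
      have We: "W = Em (axis m (1::real)) (axis n 1) 0 (-1) 1 0" unfolding W_def by (rule swapJ[OF mn])
      have WR: "W = Rot (axis m 1) (axis n 1) (pi/2)" unfolding We by simp
      have WG: "W \<in> G" unfolding WR using G axis_orthonormal2[OF mn] by (rule grp_Rot)
      have Wd: "det W = 1" unfolding WR using axis_orthonormal2[OF mn] by (rule Rot_det)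
      define d' where "d' = (\<lambda>i. (if i = n then -1 else 1) * d (Transposition.transpose m n i))"
      have "s ** diagm d ** ?S = s ** (?S ** diagm (\<lambda>i. d (Transposition.transpose m n i)))"
        by (simp add: matrix_mul_assoc[symmetric] diag_swap)
      also have "\<dots> = s ** (?S ** (flipm n ** flipm n) ** diagm (\<lambda>i. d (Transposition.transpose m n i)))"
        by (simp add: flipm_sq)
      also have "\<dots> = (s ** (?S ** flipm n)) ** (flipm n ** diagm (\<lambda>i. d (Transposition.transpose m n i)))"
        by (simp only: matrix_mul_assoc)
      also have "flipm n ** diagm (\<lambda>i. d (Transposition.transpose m n i)) = diagm d'"
        unfolding flipm_def d'_def diagm_mult ..
      also have "(s ** (?S ** flipm n)) = s ** W" unfolding W_def ..
      finally have eq: "s ** diagm d ** ?S = (s ** W) ** diagm d'" .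
      have "s ** W \<in> G" using G sd WG by (simp add: grp_mul)
      moreover have "det (s ** W) = 1" using sd Wd by (simp add: det_mul)
      moreover have "\<forall>i. d' i \<noteq> 0" using sd unfolding d'_def by auto
      ultimately show "\<exists>s' d'. s' \<in> G \<and> det s' = 1 \<and> (\<forall>i. d' i \<noteq> 0) \<and> s ** diagm d ** ?S = s' ** diagm d'"
        using eq by blast
    qed
  next
    fix m n :: 'n and c :: real assume mn: "m \<noteq> n"
    let ?T = "\<lambda>c. (\<chi> i j. if i = m \<and> j = n then c else of_bool (i = j)) :: real^'n^'n"
    show "Pp G (?T c)" unfolding Pp_def
    proof (intro disjI2 allI impI)
      fix s and d :: "'n \<Rightarrow> real" assume sd: "s \<in> G \<and> det s = 1 \<and> (\<forall>i. d i \<noteq> (0::real))"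
      have e1: "diagm d ** ?T c = ?T (d m * c / d n) ** diagm d"
        by (rule diag_transv[OF mn]) (use sd in auto)
      have "s ** diagm d ** ?T c = (s ** ?T (d m * c / d n)) ** diagm d"
        by (simp only: matrix_mul_assoc[symmetric] e1)
      moreover have "s ** ?T (d m * c / d n) \<in> G" using G sd T[OF mn] by (simp add: grp_mul)
      moreover have "det (s ** ?T (d m * c / d n)) = 1" using sd det_transv[OF mn] by (simp add: det_mul)
      ultimately show "\<exists>s' d'. s' \<in> G \<and> det s' = 1 \<and> (\<forall>i. d' i \<noteq> 0) \<and> s ** diagm d ** ?T c = s' ** diagm d'"
        using sd by blast
    qed
  qed
  then obtain s' and d' :: "'n \<Rightarrow> real" where s': "s' \<in> G" "det s' = 1" "mat 1 ** diagm (\<lambda>i. 1) ** A = s' ** diagm d'"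
    using detA grp_one[OF G] unfolding Pp_def by (metis det_I zero_neq_one)
  have Ae: "A = s' ** diagm d'" using s'(3) by (simp add: diagm_one)
  have "prod d' UNIV = 1" using detA s'(2) unfolding Ae det_mul diagm_det by simp
  then have "diagm d' \<in> G" by (rule D)
  then show ?thesis unfolding Ae using G s'(1) by (simp add: grp_mul)
qed

lemma noncase:
  fixes G :: "(real^'n::finite^'n) set"
  assumes G: "grp G" and gG: "g \<in> G" and nc: "\<not> confm g"
  shows "SLn \<subseteq> G"
proof -
  obtain u v r where uv: "orthonormal2 u v" and r: "r > 0" "r \<noteq> 1" and D: "Em u v r 0 0 (1/r) \<in> G"
    using start[OF G gG nc] by blast
  have T0: "\<forall>c. Em u v 1 c 0 1 \<in> G" using transv_all[OF G uv r D] by blast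
  have T1: "\<forall>m n c. m \<noteq> n \<longrightarrow> Em (axis m 1) (axis n 1) 1 c 0 1 \<in> G"
    using std_transv[OF G uv T0] by blast
  have T: "(\<chi> i j. if i = m \<and> j = n then c else of_bool (i = j)) \<in> G" if mn: "m \<noteq> n" for m n c
    unfolding transv_eq[OF mn] using T1 mn by blast
  have B: "diagm (\<lambda>i. if i = m then t else if i = n then 1/t else (1::real)) \<in> G"
    if mn: "m \<noteq> n" and t: "t \<noteq> 0" for m n t
    using diagB[OF G T1 mn t] unfolding diagB_eq[OF mn] .
  have Dall: "\<And>d. prod d UNIV = 1 \<Longrightarrow> diagm d \<in> G"
    by (rule diag_all[OF G B])
  show ?thesis
    using SL_in[OF G T Dall] unfolding SLn_def by blast
qed

lemma emb_diagm:
  fixes x :: real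
  shows "(emb x :: real^('n::{finite,wellorder})^('n::{finite,wellorder})) =
   diagm (\<lambda>i. (if i = (first_index::'n::{finite,wellorder}) then sgn x else 1) * \<bar>x\<bar> powr (1 / real CARD('n::{finite,wellorder})))"
  by (simp add: emb_def diagm_def)

lemma powr_card: "(\<bar>x::real\<bar> powr (1 / real CARD('n::finite))) ^ CARD('n::finite) = \<bar>x\<bar>"
proof -
  have c: "real CARD('n) > 0" by simp
  show ?thesis
  proof (cases "x = 0")
    case True then show ?thesis by simp
  next
    case False
    then have "(\<bar>x\<bar> powr (1 / real CARD('n))) ^ CARD('n) = \<bar>x\<bar> powr (1 / real CARD('n) * real CARD('n))"
      by (simp add: powr_realpow[symmetric] powr_powr)
    also have "\<dots> = \<bar>x\<bar>" using c by simp
    finally show ?thesis .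
  qed
qed

lemma det_emb: "det (emb x :: real^('n::{finite,wellorder})^('n::{finite,wellorder})) = x"
proof -
  have "det (emb x :: real^('n::{finite,wellorder})^('n::{finite,wellorder})) = prod (\<lambda>i. (if i = (first_index::'n) then sgn x else 1) * \<bar>x\<bar> powr (1 / real CARD('n))) UNIV"
    unfolding emb_diagm diagm_det ..
  also have "\<dots> = sgn x * (\<bar>x\<bar> powr (1 / real CARD('n))) ^ CARD('n)"
    by (simp add: prod.distrib prod.delta)
  also have "\<dots> = x" by (simp add: powr_card sgn_mult_abs)
  finally show ?thesis .
qed

lemma emb_mult: "(emb (x*y) :: real^('n::{finite,wellorder})^('n::{finite,wellorder})) = emb x ** emb y"
  unfolding emb_diagm diagm_mult
  by (rule arg_cong[where f=diagm]) (auto simp: fun_eq_iff abs_mult powr_mult sgn_mult)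

lemma emb_one: "(emb 1 :: real^('n::{finite,wellorder})^('n::{finite,wellorder})) = mat 1"
proof -
  have "(\<lambda>i::'n. (if i = first_index then sgn (1::real) else 1) * \<bar>1::real\<bar> powr (1 / real CARD('n))) = (\<lambda>i. 1)"
    by auto
  then show ?thesis unfolding emb_diagm by (simp only: diagm_one)
qed

lemma matrix_inv_eq:
  fixes A B :: "real^('n::finite)^('n::finite)"
  assumes "A ** B = mat 1" "B ** A = mat 1"
  shows "matrix_inv A = B"
proof -
  have inv: "invertible A" using assms unfolding invertible_def by blast
  have "matrix_inv A = matrix_inv A ** (A ** B)" using assms by simp
  also have "\<dots> = (matrix_inv A ** A) ** B" by (simp add: matrix_mul_assoc)
  also have "\<dots> = B" using matrix_inv_props[OF inv] by simp
  finally show ?thesis .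
qed

lemma emb_inv:
  assumes "x \<noteq> 0"
  shows "matrix_inv (emb x :: real^('n::{finite,wellorder})^('n::{finite,wellorder})) = emb (inverse x)"
  by (rule matrix_inv_eq) (simp_all add: emb_mult[symmetric] emb_one assms)

lemma sgn_real_eq: "sgn (x::real) = x / \<bar>x\<bar>"
  by (cases "x = 0") (auto simp: sgn_if)

lemma emb_cont: "continuous_on (- {0}) (emb :: real \<Rightarrow> real^('n::{finite,wellorder})^('n::{finite,wellorder}))"
proof -
  have s: "continuous_on (- {0}) (\<lambda>x::real. sgn x)"
  proof -
    have "continuous_on (- {0}) (\<lambda>x::real. x / \<bar>x\<bar>)" by (intro continuous_intros) auto
    then show ?thesis by (simp add: sgn_real_eq)
  qed
  have p: "continuous_on (- {0}) (\<lambda>x::real. \<bar>x\<bar> powr (1 / real CARD('n)))"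
    by (intro continuous_intros) auto
  have c: "continuous_on (- {0}) (\<lambda>x::real. if i = j then (if i = (first_index::'n) then sgn x else 1) *
                      \<bar>x\<bar> powr (1 / real CARD('n)) else 0)" for i j :: 'n
    by (cases "i = j"; cases "i = (first_index::'n)") (simp_all add: continuous_on_mult s p)
  show ?thesis
    unfolding emb_def
    by (intro continuous_on_vec_lambda c)
qed

lemma scaleR_mv: "(c *\<^sub>R A) *v w = c *\<^sub>R (A *v (w::real^'n))"
  by (simp add: scaleR_matrix_vector_assoc)

lemma conf_case:
  fixes G :: "(real^('n::{finite,wellorder})^('n::{finite,wellorder})) set"
  assumes G: "grp G" and gG: "g \<in> G" and cf: "confm g"
  shows "det g \<noteq> 0 \<and> emb (det g) \<in> G \<and> (\<exists>k\<in>SOn. g = k ** emb (det g))"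
proof -
  let ?f = "first_index :: 'n"
  have inv: "invertible g" using grp_invertible[OF G gG] .
  then have dg: "det g \<noteq> 0" by (simp add: invertible_det_nz)
  define gi where "gi = matrix_inv g"
  have ggi: "gi ** g = mat 1" unfolding gi_def using matrix_inv_props[OF inv] by simp
  define e where "e = axis ?f (1::real)"
  define l where "l = norm (g *v e)"
  have ge0: "g *v e \<noteq> 0"
  proof
    assume "g *v e = 0"
    then have "gi *v (g *v e) = 0" by simp
    then have "e = 0" by (simp add: matrix_vector_mul_assoc ggi)
    then show False unfolding e_def by simp
  qed
  have l0: "l > 0" unfolding l_def using ge0 by simp
  have nrm: "norm (g *v w) = l * norm w" for w
  proof (cases "w = 0")
    case True then show ?thesis by simp
  next
    case False
    define w' where "w' = (1 / norm w) *\<^sub>R w"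
    have "norm w' = norm e" unfolding w'_def e_def using False by simp
    then have "norm (g *v w') = l" using cf unfolding confm_def l_def by blast
    moreover have "g *v w = norm w *\<^sub>R (g *v w')"
      unfolding w'_def using False by (simp add: matrix_vector_mult_scaleR)
    ultimately show ?thesis by simp
  qed
  define om where "om = (1 / l) *\<^sub>R g"
  have onrm: "norm (om *v w) = norm w" for w
    unfolding om_def scaleR_mv using l0 nrm[of w] by simp
  have "orthogonal_transformation ((*v) om)"
    unfolding orthogonal_transformation using onrm by (simp add: matrix_vector_mul_linear)
  then have oo: "orthogonal_matrix om"
    unfolding orthogonal_transformation_matrix by simp
  have go: "g = diagm (\<lambda>_. l) ** om"
    unfolding om_def using l0 by (simp add: vec_eq_iff diagm_left)
  define s where "s = det om"
  have s1: "s = 1 \<or> s = -1" unfolding s_def by (rule det_orthogonal_matrix[OF oo])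
  have detg: "det g = l ^ CARD('n) * s"
    unfolding s_def by (subst go) (simp add: det_mul diagm_det)
  have sgnx: "sgn (det g) = s" using s1 l0 unfolding detg by (auto simp: sgn_mult)
  have absx: "\<bar>det g\<bar> powr (1 / real CARD('n)) = l"
  proof -
    have "\<bar>det g\<bar> = l powr (real CARD('n))" using s1 l0 unfolding detg
      by (auto simp: abs_mult powr_realpow)
    then show ?thesis using l0 by (simp add: powr_powr)
  qed
  define J where "J = diagm (\<lambda>i. if i = ?f then s else 1)"
  have JJ: "J ** J = mat 1"
  proof -
    have "(\<lambda>i. (if i = ?f then s else 1) * (if i = ?f then s else 1)) = (\<lambda>i. 1)"
      using s1 by auto
    then show ?thesis unfolding J_def diagm_mult by (simp only: diagm_one)
  qed
  have Jo: "orthogonal_matrix J" unfolding orthogonal_matrix using JJ by (simp add: J_def diagm_transpose)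
  have Jd: "det J = s" unfolding J_def diagm_det by (subst prod.delta) auto
  define k where "k = om ** J"
  have ko: "orthogonal_matrix k" unfolding k_def by (rule orthogonal_matrix_mul[OF oo Jo])
  have kd: "det k = 1" unfolding k_def det_mul Jd using s1 s_def by auto
  have kS: "k \<in> SOn" using ko kd by (simp add: SOn_def)
  have embx: "emb (det g) = J ** diagm (\<lambda>_. l)"
    unfolding emb_diagm J_def diagm_mult sgnx absx ..
  have gk: "g = k ** emb (det g)"
  proof -
    have "k ** emb (det g) = om ** (J ** J) ** diagm (\<lambda>_. l)"
      unfolding k_def embx by (simp add: matrix_mul_assoc)
    also have "\<dots> = om ** diagm (\<lambda>_. l)" unfolding JJ by simp
    also have "\<dots> = diagm (\<lambda>_. l) ** om"
      by (simp add: vec_eq_iff diagm_left diagm_right)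
    also have "\<dots> = g" using go by simp
    finally show ?thesis by simp
  qed
  have tk: "transpose k \<in> G" using G ko kd by (simp add: grp_SO)
  have "transpose k ** (k ** emb (det g)) = emb (det g)"
    using ko by (simp add: matrix_mul_assoc orthogonal_matrix_def)
  then have "emb (det g) = transpose k ** g" using gk by simp
  then have "emb (det g) \<in> G" using G tk gG by (simp add: grp_mul)
  then show ?thesis using dg kS gk by blast
qed

theorem mainTheorem4:
  fixes G :: "(real^('n::{finite,wellorder})^('n::{finite,wellorder})) set"
  assumes "is_subgroup_GL G"
    and "SOn \<subseteq> G"
  shows "\<exists>H. is_subgroup_Rstar H \<and>
           (G = semidir SOn H \<or> G = semidir SLn H) \<and>
           (closedin (top_of_set GLn) G \<longrightarrow> closedin (top_of_set (- {0::real})) H)"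
proof -
  have G: "grp G" using assms by (simp add: grp_def)
  define H where "H = {x::real. x \<noteq> 0 \<and> (emb x :: real^('n::{finite,wellorder})^('n::{finite,wellorder})) \<in> G}"
  have Hsub: "is_subgroup_Rstar H"
    unfolding is_subgroup_Rstar_def
  proof (intro conjI ballI)
    show "H \<subseteq> - {0}" unfolding H_def by auto
    show "1 \<in> H" unfolding H_def using grp_one[OF G] by (simp add: emb_one)
  next
    fix x y assume "x \<in> H" "y \<in> H"
    then show "x * y \<in> H" unfolding H_def using G by (simp add: emb_mult grp_mul)
  next
    fix x assume "x \<in> H"
    then show "inverse x \<in> H" unfolding H_def using G by (simp add: emb_inv[symmetric] grp_inv)
  qed
  have closed: "closedin (top_of_set GLn) G \<longrightarrow> closedin (top_of_set (- {0::real})) H"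
  proof
    assume "closedin (top_of_set GLn) G"
    then obtain C where C: "closed C" "G = GLn \<inter> C" by (auto simp: closedin_closed)
    have "H = (- {0}) \<inter> emb -` C"
    proof -
      have "(emb x :: real^('n::{finite,wellorder})^('n::{finite,wellorder})) \<in> GLn" if "x \<noteq> 0" for x :: real
      proof -
        have "det (emb x :: real^('n::{finite,wellorder})^('n::{finite,wellorder})) = x" by (rule det_emb)
        then show ?thesis using that by (simp add: GLn_def invertible_det_nz)
      qed
      then show ?thesis unfolding H_def C(2) by auto
    qed
    then show "closedin (top_of_set (- {0::real})) H"
      using continuous_closedin_preimage[OF emb_cont C(1)] by simp
  qed
  have sub1: "semidir K H \<subseteq> G" if "K \<subseteq> G" for K
    unfolding semidir_def H_def using that G by (auto simp: grp_mul)
  show ?thesis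
  proof (cases "\<forall>g\<in>G. confm g")
    case True
    have "G \<subseteq> semidir SOn H"
    proof
      fix g assume gG: "g \<in> G"
      from conf_case[OF G gG] True gG
      obtain k where "k \<in> SOn" "g = k ** emb (det g)" "det g \<noteq> 0" "emb (det g) \<in> G" by blast
      then show "g \<in> semidir SOn H" unfolding semidir_def H_def by blast
    qed
    then have "G = semidir SOn H" using sub1[OF assms(2)] by blast
    then show ?thesis using Hsub closed by blast
  next
    case False
    then obtain g where gG: "g \<in> G" and nc: "\<not> confm g" by blast
    have SL: "SLn \<subseteq> G" by (rule noncase[OF G gG nc])
    have "G \<subseteq> semidir SLn H"
    proof
      fix g assume gG: "g \<in> G"
      have inv: "invertible g" using grp_invertible[OF G gG] .
      define x where "x = det g"
      have x0: "x \<noteq> 0" unfolding x_def using inv by (simp add: invertible_det_nz)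
      define s where "s = g ** emb (inverse x)"
      have ds: "det s = 1" unfolding s_def det_mul det_emb x_def using x0 x_def by simp
      then have sS: "s \<in> SLn" by (simp add: SLn_def)
      have sG: "s \<in> G" using SL sS by blast
      have se: "s ** emb x = g"
      proof -
        have "s ** emb x = g ** (emb (inverse x) ** emb x)" unfolding s_def by (simp add: matrix_mul_assoc)
        also have "emb (inverse x) ** emb x = (emb 1 :: real^('n::{finite,wellorder})^('n::{finite,wellorder}))"
          by (simp add: emb_mult[symmetric] x0)
        finally show ?thesis by (simp add: emb_one)
      qed
      have sinv: "invertible s" using ds by (simp add: invertible_det_nz)
      have "emb x = matrix_inv s ** g"
        using se matrix_inv_props[OF sinv] by (metis matrix_mul_assoc matrix_mul_lid)
      then have "emb x \<in> G" using G sG gG by (simp add: grp_inv grp_mul)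
      then have "x \<in> H" unfolding H_def using x0 by simp
      then show "g \<in> semidir SLn H" unfolding semidir_def using sS se by blast
    qed
    then have "G = semidir SLn H" using sub1[OF SL] by blast
    then show ?thesis using Hsub closed by blast
  qed
qed

end
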